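(* Let $f\in\mathcal{L}^1(\mathbb{R})+BV_0(\mathbb{R})$ be such that $g(t):=t f(t)$ also belongs to $\mathcal{L}^1(\mathbb{R})+BV_0(\mathbb{R})$. Then $\mathcal{F}_{HK}(f)$ is continuously differentiable on $\mathbb{R}\setminus\{0\}$ and $$\frac{d}{ds}\mathcal{F}_{HK}(f)(s)=-i\,\mathcal{F}_{HK}(g)(s)\qquad (s\neq 0).$$
   Context: $BV_0(\mathbb{R})$: real functions of bounded variation on $\mathbb{R}$ vanishing at $\pm\infty$. $\mathcal{L}^1(\mathbb{R})+BV_0(\mathbb{R})$: functions $f=f_1+f_2$ with $f_1\in\mathcal{L}^1(\mathbb{R})$, $f_2\in BV_0(\mathbb{R})$. For such $f$ and $s\neq 0$, $\mathcal{F}_{HK}(f)(s)=\frac{1}{\sqrt{2\pi}}\int_{\mathbb{R}}e^{-isx}f(x)\,dx$, where the integral is the Henstock–Kurzweil integral over $\mathbb{R}$ (extending the Lebesgue and improper Riemann integrals; it exists for such $f$ and $s\neq0$). *)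

theory Defs
  imports "HOL-Analysis.Analysis"
begin

definition bounded_variation_real :: "(real \<Rightarrow> real) \<Rightarrow> bool" where
  "bounded_variation_real f \<longleftrightarrow>
     (\<exists>M. \<forall>xs :: real list. sorted xs \<longrightarrow>
        (\<Sum>i<length xs - 1. \<bar>f (xs ! Suc i) - f (xs ! i)\<bar>) \<le> M)"

definition BV0 :: "(real \<Rightarrow> real) set" where
  "BV0 = {f. bounded_variation_real f \<and> (f \<longlongrightarrow> 0) at_top \<and> (f \<longlongrightarrow> 0) at_bot}"

definition L1_plus_BV0 :: "(real \<Rightarrow> real) set" where
  "L1_plus_BV0 = {f. \<exists>f1 f2. f1 absolutely_integrable_on (UNIV :: real set)
                          \<and> f2 \<in> BV0 \<and> f = (\<lambda>x. f1 x + f2 x)}"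

definition FHK :: "(real \<Rightarrow> real) \<Rightarrow> real \<Rightarrow> complex" where
  "FHK f s = (1 / complex_of_real (sqrt (2 * pi))) *
     integral (UNIV :: real set) (\<lambda>x. exp (- \<i> * complex_of_real (s * x)) * complex_of_real (f x))"

end

theory Submission
  imports Defs "HOL-Probability.Characteristic_Functions"
begin


definition varsum :: "(real \<Rightarrow> real) \<Rightarrow> real list \<Rightarrow> real" where
  "varsum h xs = (\<Sum>i<length xs - 1. \<bar>h (xs ! Suc i) - h (xs ! i)\<bar>)"

lemma varsum_nonneg: "varsum h xs \<ge> 0"
  unfolding varsum_def by (auto intro: sum_nonneg)

lemma varsum_append2: "varsum h xs + \<bar>h b - h a\<bar> \<le> varsum h (xs @ [a, b])"
proof -
  let ?n = "length xs"
  let ?t = "\<lambda>i. \<bar>h ((xs @ [a, b]) ! Suc i) - h ((xs @ [a, b]) ! i)\<bar>"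
  have "varsum h (xs @ [a, b]) = sum ?t {..<?n+1}" unfolding varsum_def by simp
  also have "sum ?t {..<?n+1} \<ge> sum ?t ({..<?n - 1} \<union> {?n})"
    by (rule sum_mono2) auto
  also have "sum ?t ({..<?n - 1} \<union> {?n}) = sum ?t {..<?n - 1} + ?t ?n"
    by (subst sum.union_disjoint) auto
  also have "sum ?t {..<?n - 1} = varsum h xs" unfolding varsum_def
    by (rule sum.cong) (auto simp: nth_append)
  also have "?t ?n = \<bar>h b - h a\<bar>" by (simp add: nth_append)
  finally show ?thesis by simp
qed

definition Vf :: "(real \<Rightarrow> real) \<Rightarrow> real \<Rightarrow> real" where
  "Vf h x = Sup (varsum h ` {xs. sorted xs \<and> (\<forall>y\<in>set xs. y \<le> x)})"

lemma jordan:
  assumes "bounded_variation_real h"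
  shows "\<exists>A C M. mono A \<and> mono C \<and> (\<forall>x. h x = A x - C x) \<and> (\<forall>x. \<bar>A x\<bar> \<le> M \<and> \<bar>C x\<bar> \<le> M)"
proof -
  obtain M where M: "\<And>xs. sorted xs \<Longrightarrow> varsum h xs \<le> M"
    using assms unfolding bounded_variation_real_def varsum_def by blast
  let ?S = "\<lambda>x. varsum h ` {xs. sorted xs \<and> (\<forall>y\<in>set xs. y \<le> x)}"
  have ne: "?S x \<noteq> {}" for x by (auto intro!: exI[of _ "[]"])
  have bdd: "bdd_above (?S x)" for x using M by (auto simp: bdd_above_def)
  have VM: "Vf h x \<le> M" for x unfolding Vf_def
    by (rule cSup_least[OF ne]) (auto intro: M)
  have V0: "0 \<le> Vf h x" for x unfolding Vf_def
    by (rule order_trans[OF varsum_nonneg[of h "[]"]], rule cSup_upper[OF _ bdd]) auto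
  have key: "Vf h x + \<bar>h y - h x\<bar> \<le> Vf h y" if "x \<le> y" for x y
  proof -
    have "v + \<bar>h y - h x\<bar> \<le> Vf h y" if "v \<in> ?S x" for v
    proof -
      obtain xs where xs: "sorted xs" "\<forall>z\<in>set xs. z \<le> x" "v = varsum h xs" using \<open>v \<in> ?S x\<close> by blast
      have "sorted (xs @ [x, y])" using xs \<open>x \<le> y\<close> by (auto simp: sorted_append)
      moreover have "\<forall>z\<in>set (xs @ [x, y]). z \<le> y" using xs \<open>x \<le> y\<close> by auto
      ultimately have "varsum h (xs @ [x, y]) \<in> ?S y" by blast
      hence "varsum h (xs @ [x, y]) \<le> Vf h y" unfolding Vf_def by (rule cSup_upper[OF _ bdd])
      with varsum_append2[of h xs y x] xs show ?thesis by simp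
    qed
    hence "Vf h x \<le> Vf h y - \<bar>h y - h x\<bar>" unfolding Vf_def[of h x]
      by (intro cSup_least[OF ne]) (auto simp: algebra_simps)
    thus ?thesis by simp
  qed
  have hb: "\<bar>h x\<bar> \<le> \<bar>h 0\<bar> + M" for x
  proof (cases "0 \<le> x")
    case True with key[of 0 x] V0[of 0] VM[of x] show ?thesis by linarith
  next
    case False with key[of x 0] V0[of x] VM[of 0] show ?thesis by linarith
  qed
  show ?thesis
  proof (intro exI conjI allI)
    show "mono (Vf h)"
    proof (rule monoI)
      fix x y :: real assume "x \<le> y"
      from key[OF this] show "Vf h x \<le> Vf h y" using abs_ge_zero[of "h y - h x"] by linarith
    qed
    show "mono (\<lambda>x. Vf h x - h x)" using key by (fastforce simp: mono_def abs_le_iff)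
    show "h x = Vf h x - (Vf h x - h x)" for x by simp
    show "\<bar>Vf h x\<bar> \<le> \<bar>h 0\<bar> + 2*M" for x using V0[of x] VM[of x] V0[of 0] VM[of 0] by auto
    show "\<bar>Vf h x - h x\<bar> \<le> \<bar>h 0\<bar> + 2*M" for x using V0[of x] VM[of x] hb[of x] by auto
  qed
qed



lemma smvt_bound:
  fixes g \<psi> :: "real \<Rightarrow> real"
  assumes g: "mono g" and \<psi>: "continuous_on {p..q} \<psi>" and pq: "p \<le> q"
    and K: "\<And>a b. p \<le> a \<Longrightarrow> a \<le> b \<Longrightarrow> b \<le> q \<Longrightarrow> \<bar>integral {a..b} \<psi>\<bar> \<le> K"
  shows "(\<lambda>x. g x * \<psi> x) integrable_on {p..q}
     \<and> \<bar>integral {p..q} (\<lambda>x. g x * \<psi> x)\<bar> \<le> (\<bar>g p\<bar> + \<bar>g q\<bar>) * K"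
proof -
  have "\<psi> integrable_on {p..q}" using \<psi> by (rule integrable_continuous_interval)
  then obtain c where c: "c \<in> {p..q}"
    and hi: "((\<lambda>x. g x * \<psi> x) has_integral (g p * integral {p..c} \<psi> + g q * integral {c..q} \<psi>)) {p..q}"
    using second_mean_value_theorem_full[of \<psi> p q g] pq g by (auto simp: mono_def)
  have "\<bar>g p * integral {p..c} \<psi>\<bar> \<le> \<bar>g p\<bar> * K"
    unfolding abs_mult by (rule mult_left_mono) (use K c in auto)
  moreover have "\<bar>g q * integral {c..q} \<psi>\<bar> \<le> \<bar>g q\<bar> * K"
    unfolding abs_mult by (rule mult_left_mono) (use K c in auto)
  ultimately show ?thesis using hi integral_unique[OF hi]
    by (auto simp: integrable_on_def algebra_simps)
qed

lemma cos_int_bound: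
  fixes u :: real assumes "u \<noteq> 0" "a \<le> b"
  shows "\<bar>integral {a..b} (\<lambda>x. cos (u * x))\<bar> \<le> 2 / \<bar>u\<bar>"
proof -
  have "((\<lambda>x. cos (u * x)) has_integral (sin (u * b) / u - sin (u * a) / u)) {a..b}"
    by (rule fundamental_theorem_of_calculus[OF \<open>a \<le> b\<close>])
       (use \<open>u \<noteq> 0\<close> in \<open>auto intro!: derivative_eq_intros simp: has_real_derivative_iff_has_vector_derivative[symmetric]\<close>)
  hence "integral {a..b} (\<lambda>x. cos (u * x)) = (sin (u * b) - sin (u * a)) / u"
    by (simp add: integral_unique diff_divide_distrib)
  also have "\<bar>\<dots>\<bar> \<le> 2 / \<bar>u\<bar>"
  proof -
    have "\<bar>sin (u * b) - sin (u * a)\<bar> \<le> 2"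
      using abs_sin_le_one[of "u*b"] abs_sin_le_one[of "u*a"] by (simp add: abs_le_iff; linarith)
    thus ?thesis by (simp add: abs_divide divide_right_mono)
  qed
  finally show ?thesis .
qed

lemma sin_int_bound:
  fixes u :: real assumes "u \<noteq> 0" "a \<le> b"
  shows "\<bar>integral {a..b} (\<lambda>x. sin (u * x))\<bar> \<le> 2 / \<bar>u\<bar>"
proof -
  have "((\<lambda>x. sin (u * x)) has_integral (- cos (u * b) / u - - cos (u * a) / u)) {a..b}"
    by (rule fundamental_theorem_of_calculus[OF \<open>a \<le> b\<close>])
       (use \<open>u \<noteq> 0\<close> in \<open>auto intro!: derivative_eq_intros simp: has_real_derivative_iff_has_vector_derivative[symmetric]\<close>)
  hence "integral {a..b} (\<lambda>x. sin (u * x)) = (cos (u * a) - cos (u * b)) / u"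
    by (simp add: integral_unique diff_divide_distrib)
  also have "\<bar>\<dots>\<bar> \<le> 2 / \<bar>u\<bar>"
  proof -
    have "\<bar>cos (u * a) - cos (u * b)\<bar> \<le> 2"
      using abs_cos_le_one[of "u*b"] abs_cos_le_one[of "u*a"] by (simp add: abs_le_iff; linarith)
    thus ?thesis by (simp add: abs_divide divide_right_mono)
  qed
  finally show ?thesis .
qed

lemma bv_piece:
  fixes h A C \<psi> :: "real \<Rightarrow> real"
  assumes A: "mono A" and C: "mono C" and h: "\<And>x. h x = A x - C x"
    and e: "\<bar>A p - L\<bar> \<le> e" "\<bar>A q - L\<bar> \<le> e" "\<bar>C p - L\<bar> \<le> e" "\<bar>C q - L\<bar> \<le> e"
    and \<psi>: "continuous_on {p..q} \<psi>" and pq: "p \<le> q"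
    and K: "\<And>a b. p \<le> a \<Longrightarrow> a \<le> b \<Longrightarrow> b \<le> q \<Longrightarrow> \<bar>integral {a..b} \<psi>\<bar> \<le> K"
    and K0: "0 \<le> K"
  shows "(\<lambda>x. h x * \<psi> x) integrable_on {p..q}
     \<and> \<bar>integral {p..q} (\<lambda>x. h x * \<psi> x)\<bar> \<le> 4 * e * K"
proof -
  have mA: "mono (\<lambda>x. A x - L)" using A by (auto simp: mono_def)
  have mC: "mono (\<lambda>x. C x - L)" using C by (auto simp: mono_def)
  note a = smvt_bound[OF mA \<psi> pq K] and c = smvt_bound[OF mC \<psi> pq K]
  have eq: "(\<lambda>x. h x * \<psi> x) = (\<lambda>x. (A x - L) * \<psi> x - (C x - L) * \<psi> x)"
    by (auto simp: h algebra_simps)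
  have int: "(\<lambda>x. h x * \<psi> x) integrable_on {p..q}" unfolding eq using a c by (intro integrable_diff) auto
  have "integral {p..q} (\<lambda>x. h x * \<psi> x) = integral {p..q} (\<lambda>x. (A x - L) * \<psi> x) - integral {p..q} (\<lambda>x. (C x - L) * \<psi> x)"
    unfolding eq using a c by (intro integral_diff) auto
  moreover have "(\<bar>A p - L\<bar> + \<bar>A q - L\<bar>) * K \<le> 2 * e * K" "(\<bar>C p - L\<bar> + \<bar>C q - L\<bar>) * K \<le> 2 * e * K"
    using e K0 by (auto intro!: mult_right_mono)
  moreover have "\<bar>integral {p..q} (\<lambda>x. (A x - L) * \<psi> x)\<bar> \<le> (\<bar>A p - L\<bar> + \<bar>A q - L\<bar>) * K"
    using a by blast
  moreover have "\<bar>integral {p..q} (\<lambda>x. (C x - L) * \<psi> x)\<bar> \<le> (\<bar>C p - L\<bar> + \<bar>C q - L\<bar>) * K"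
    using c by blast
  ultimately show ?thesis using int by linarith
qed

lemma exp_neg_i: "exp (- \<i> * complex_of_real t) = complex_of_real (cos t) - \<i> * complex_of_real (sin t)"
  by (simp add: complex_eq_iff Re_exp Im_exp)

lemma bv_piece_complex:
  fixes h A C :: "real \<Rightarrow> real"
  assumes A: "mono A" and C: "mono C" and h: "\<And>x. h x = A x - C x"
    and e: "\<bar>A p - L\<bar> \<le> e" "\<bar>A q - L\<bar> \<le> e" "\<bar>C p - L\<bar> \<le> e" "\<bar>C q - L\<bar> \<le> e"
    and pq: "p \<le> q" and u: "u \<noteq> 0"
  shows "cmod (integral {p..q} (\<lambda>x. exp (- \<i> * complex_of_real (u * x)) * complex_of_real (h x)))
           \<le> 16 * e / \<bar>u\<bar>"
proof -
  have "0 \<le> e" using e by linarith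
  have c: "(\<lambda>x. h x * cos (u * x)) integrable_on {p..q} \<and> \<bar>integral {p..q} (\<lambda>x. h x * cos (u * x))\<bar> \<le> 4 * e * (2 / \<bar>u\<bar>)"
    by (rule bv_piece[OF A C h e _ pq]) (auto intro!: continuous_intros cos_int_bound u)
  have s: "(\<lambda>x. h x * sin (u * x)) integrable_on {p..q} \<and> \<bar>integral {p..q} (\<lambda>x. h x * sin (u * x))\<bar> \<le> 4 * e * (2 / \<bar>u\<bar>)"
    by (rule bv_piece[OF A C h e _ pq]) (auto intro!: continuous_intros sin_int_bound u)
  let ?I1 = "integral {p..q} (\<lambda>x. h x * cos (u * x))" and ?I2 = "integral {p..q} (\<lambda>x. h x * sin (u * x))"
  have hc: "((\<lambda>x. complex_of_real (h x * cos (u * x))) has_integral complex_of_real ?I1) {p..q}"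
    using c by (intro has_integral_of_real) auto
  have hs: "((\<lambda>x. \<i> * complex_of_real (h x * sin (u * x))) has_integral (\<i> * complex_of_real ?I2)) {p..q}"
    using s by (intro has_integral_mult_right has_integral_of_real) auto
  have "((\<lambda>x. exp (- \<i> * complex_of_real (u * x)) * complex_of_real (h x)) has_integral
          (complex_of_real ?I1 - \<i> * complex_of_real ?I2)) {p..q}"
  proof -
    have "exp (- \<i> * complex_of_real (u * x)) * complex_of_real (h x) =
           complex_of_real (h x * cos (u * x)) - \<i> * complex_of_real (h x * sin (u * x))" for x
      by (simp only: exp_neg_i) (simp add: algebra_simps)
    thus ?thesis using has_integral_diff[OF hc hs] by simp
  qed
  hence "integral {p..q} (\<lambda>x. exp (- \<i> * complex_of_real (u * x)) * complex_of_real (h x)) =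
          complex_of_real ?I1 - \<i> * complex_of_real ?I2" by (rule integral_unique)
  also have "cmod \<dots> \<le> \<bar>?I1\<bar> + \<bar>?I2\<bar>"
    by (rule order_trans[OF norm_triangle_ineq4]) (simp add: norm_mult)
  also have "\<dots> \<le> 16 * e / \<bar>u\<bar>" using c s by auto
  finally show ?thesis .
qed



abbreviation Ek :: "real \<Rightarrow> real \<Rightarrow> complex" where
  "Ek u x \<equiv> exp (- \<i> * complex_of_real (u * x))"

lemma mono_lim_top:
  fixes A :: "real \<Rightarrow> real"
  assumes "mono A" "\<And>x. \<bar>A x\<bar> \<le> M"
  shows "(A \<longlongrightarrow> Sup (range A)) at_top"
proof -
  have bdd: "bdd_above (range A)" using assms(2) by (auto simp: bdd_above_def abs_le_iff)
  show ?thesis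
  proof (rule increasing_tendsto)
    show "\<forall>\<^sub>F n in at_top. A n \<le> Sup (range A)" by (intro always_eventually allI cSup_upper[OF _ bdd]) auto
    fix y assume "y < Sup (range A)"
    then obtain x0 where "y < A x0" by (auto simp: less_cSup_iff[OF _ bdd])
    thus "\<forall>\<^sub>F n in at_top. y < A n"
      unfolding eventually_at_top_linorder using assms(1) \<open>y < A x0\<close>
      by (auto simp: mono_def intro!: exI[of _ x0] intro: less_le_trans)
  qed
qed

lemma mono_lim_bot:
  fixes A :: "real \<Rightarrow> real"
  assumes "mono A" "\<And>x. \<bar>A x\<bar> \<le> M"
  shows "(A \<longlongrightarrow> Inf (range A)) at_bot"
proof -
  have bdd: "bdd_below (range A)"
  proof (rule bdd_belowI)
    fix y assume "y \<in> range A"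
    then obtain x where "y = A x" by auto
    thus "-M \<le> y" using assms(2)[of x] by (simp add: abs_le_iff)
  qed
  show ?thesis
  proof (rule decreasing_tendsto)
    show "\<forall>\<^sub>F n in at_bot. Inf (range A) \<le> A n" by (intro always_eventually allI cInf_lower[OF _ bdd]) auto
    fix y assume "Inf (range A) < y"
    then obtain x0 where "A x0 < y" by (auto simp: cInf_less_iff[OF _ bdd])
    thus "\<forall>\<^sub>F n in at_bot. A n < y"
      unfolding eventually_at_bot_linorder using assms(1) \<open>A x0 < y\<close>
      by (auto simp: mono_def intro!: exI[of _ x0] intro: le_less_trans)
  qed
qed

lemma mono_abs_int:
  fixes A :: "real \<Rightarrow> real"
  assumes "mono A" "\<And>x. \<bar>A x\<bar> \<le> M"
  shows "A absolutely_integrable_on {p..q}"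
proof (cases "p \<le> q")
  case True
  have "(\<lambda>x. A x * 1) integrable_on {p..q}"
    using smvt_bound[OF assms(1) _ True, of "\<lambda>_. 1" "q - p"] by auto
  hence "A integrable_on {p..q}" by simp
  thus ?thesis
    by (rule absolutely_integrable_integrable_bound[where g="\<lambda>_. M", rotated]) (use assms(2) in auto)
next
  case False thus ?thesis by simp
qed

lemma loc_abs:
  assumes "\<phi> \<in> L1_plus_BV0"
  shows "\<phi> absolutely_integrable_on {p..q}"
proof -
  obtain f1 f2 where f1: "f1 absolutely_integrable_on UNIV" and f2: "f2 \<in> BV0" and eq: "\<phi> = (\<lambda>x. f1 x + f2 x)"
    using assms unfolding L1_plus_BV0_def by blast
  obtain A C M where A: "mono A" and C: "mono C" and h: "\<And>x. f2 x = A x - C x"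
    and M: "\<And>x. \<bar>A x\<bar> \<le> M \<and> \<bar>C x\<bar> \<le> M"
    using jordan[of f2] f2 unfolding BV0_def by blast
  have "f1 absolutely_integrable_on {p..q}"
    by (rule set_integrable_subset[OF f1]) auto
  moreover have "(\<lambda>x. A x - C x) absolutely_integrable_on {p..q}"
    using mono_abs_int[OF A, of M] mono_abs_int[OF C, of M] M by (intro set_integral_diff(1)) auto
  ultimately show ?thesis unfolding eq h by (intro set_integral_add(1))
qed

lemma bilinear_cmult: "bilinear (\<lambda>(c::complex) (r::real). c * complex_of_real r)"
  unfolding bilinear_def by (auto intro!: linearI simp: algebra_simps scaleR_conv_of_real)

lemma prod_abs_int:
  fixes w :: "real \<Rightarrow> complex" and \<phi> :: "real \<Rightarrow> real"
  assumes "continuous_on {p..q} w" "\<phi> absolutely_integrable_on {p..q}"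
  shows "(\<lambda>x. w x * complex_of_real (\<phi> x)) absolutely_integrable_on {p..q}"
proof (rule absolutely_integrable_bounded_measurable_product[OF bilinear_cmult, simplified])
  show "w \<in> borel_measurable (lebesgue_on {p..q})"
    by (rule continuous_imp_measurable_on_sets_lebesgue[OF assms(1)]) auto
  show "bounded (w ` {p..q})"
    by (rule compact_imp_bounded[OF compact_continuous_image[OF assms(1)]]) auto
qed (use assms in auto)

lemma tail_L1:
  fixes f1 :: "real \<Rightarrow> real"
  assumes f1: "f1 absolutely_integrable_on UNIV" and e: "e > 0"
  shows "\<exists>B>0. \<forall>p q. (B \<le> p \<and> p \<le> q \<or> p \<le> q \<and> q \<le> -B) \<longrightarrow> integral {p..q} (\<lambda>x. \<bar>f1 x\<bar>) < e"
proof -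
  have ni: "(\<lambda>x. \<bar>f1 x\<bar>) integrable_on UNIV" using f1 by (simp add: absolutely_integrable_on_def)
  have loc: "(\<lambda>x. \<bar>f1 x\<bar>) integrable_on {a..b}" for a b
    using integrable_altD(1)[OF ni, of a b] by simp
  obtain B where B: "B > 0" and BB: "\<And>a b c d. ball 0 B \<subseteq> cbox a b \<Longrightarrow> ball 0 B \<subseteq> cbox c d \<Longrightarrow>
      norm (integral (cbox a b) (\<lambda>x. \<bar>f1 x\<bar>) - integral (cbox c d) (\<lambda>x. \<bar>f1 x\<bar>)) < e"
    using integrable_altD(2)[OF ni e] by auto
  have ballsub: "ball 0 B \<subseteq> cbox a b" if "a \<le> -B" "B \<le> b" for a b :: real
    using that by (auto simp: dist_real_def)
  show ?thesis
  proof (intro exI[of _ B] conjI allI impI B)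
    fix p q :: real assume "B \<le> p \<and> p \<le> q \<or> p \<le> q \<and> q \<le> -B"
    thus "integral {p..q} (\<lambda>x. \<bar>f1 x\<bar>) < e"
    proof
      assume pq: "B \<le> p \<and> p \<le> q"
      have "integral {-B..p} (\<lambda>x. \<bar>f1 x\<bar>) + integral {p..q} (\<lambda>x. \<bar>f1 x\<bar>) = integral {-B..q} (\<lambda>x. \<bar>f1 x\<bar>)"
        using pq B by (intro Henstock_Kurzweil_Integration.integral_combine loc) auto
      moreover have "norm (integral (cbox (-B) q) (\<lambda>x. \<bar>f1 x\<bar>) - integral (cbox (-B) p) (\<lambda>x. \<bar>f1 x\<bar>)) < e"
        using pq by (intro BB ballsub) auto
      ultimately show ?thesis by simp
    next
      assume pq: "p \<le> q \<and> q \<le> -B"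
      have "integral {p..q} (\<lambda>x. \<bar>f1 x\<bar>) + integral {q..B} (\<lambda>x. \<bar>f1 x\<bar>) = integral {p..B} (\<lambda>x. \<bar>f1 x\<bar>)"
        using pq B by (intro Henstock_Kurzweil_Integration.integral_combine loc) auto
      moreover have "norm (integral (cbox p B) (\<lambda>x. \<bar>f1 x\<bar>) - integral (cbox q B) (\<lambda>x. \<bar>f1 x\<bar>)) < e"
        using pq by (intro BB ballsub) auto
      ultimately show ?thesis by simp
    qed
  qed
qed



lemma norm_Ek: "cmod (Ek u x) = 1"
  by (simp add: norm_exp_eq_Re)

lemma Ek_prod_abs_int:
  assumes "\<phi> \<in> L1_plus_BV0"
  shows "(\<lambda>x. Ek u x * complex_of_real (\<phi> x)) absolutely_integrable_on {p..q}"
  by (rule prod_abs_int[OF _ loc_abs[OF assms]]) (intro continuous_intros)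

lemma Ek_int:
  assumes "\<phi> \<in> L1_plus_BV0"
  shows "(\<lambda>x. Ek u x * complex_of_real (\<phi> x)) integrable_on {p..q}"
  using Ek_prod_abs_int[OF assms] by (simp add: absolutely_integrable_on_def)

lemma lim_eventually_top:
  fixes A :: "real \<Rightarrow> real"
  assumes "(A \<longlongrightarrow> L) at_top" "(C \<longlongrightarrow> L) at_top" "e > 0"
  shows "\<exists>N. \<forall>x\<ge>N. \<bar>A x - L\<bar> \<le> e \<and> \<bar>C x - L\<bar> \<le> e"
proof -
  have "\<forall>\<^sub>F x in at_top. dist (A x) L < e" "\<forall>\<^sub>F x in at_top. dist (C x) L < e"
    using assms tendsto_iff by blast+
  hence "\<forall>\<^sub>F x in at_top. \<bar>A x - L\<bar> \<le> e \<and> \<bar>C x - L\<bar> \<le> e"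
    by eventually_elim (auto simp: dist_real_def)
  thus ?thesis by (simp add: eventually_at_top_linorder)
qed

lemma lim_eventually_bot:
  fixes A :: "real \<Rightarrow> real"
  assumes "(A \<longlongrightarrow> L) at_bot" "(C \<longlongrightarrow> L) at_bot" "e > 0"
  shows "\<exists>N. \<forall>x\<le>N. \<bar>A x - L\<bar> \<le> e \<and> \<bar>C x - L\<bar> \<le> e"
proof -
  have "\<forall>\<^sub>F x in at_bot. dist (A x) L < e" "\<forall>\<^sub>F x in at_bot. dist (C x) L < e"
    using assms tendsto_iff by blast+
  hence "\<forall>\<^sub>F x in at_bot. \<bar>A x - L\<bar> \<le> e \<and> \<bar>C x - L\<bar> \<le> e"
    by eventually_elim (auto simp: dist_real_def)
  thus ?thesis by (simp add: eventually_at_bot_linorder)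
qed

lemma tail:
  assumes phi: "\<phi> \<in> L1_plus_BV0" and d: "\<delta> > 0" and e: "e > 0"
  shows "\<exists>B>0. \<forall>u p q. \<delta> \<le> \<bar>u\<bar> \<longrightarrow> (B \<le> p \<and> p \<le> q \<or> p \<le> q \<and> q \<le> -B) \<longrightarrow>
            cmod (integral {p..q} (\<lambda>x. Ek u x * complex_of_real (\<phi> x))) \<le> e"
proof -
  obtain f1 f2 where f1: "f1 absolutely_integrable_on UNIV" and f2: "f2 \<in> BV0" and eq: "\<phi> = (\<lambda>x. f1 x + f2 x)"
    using phi unfolding L1_plus_BV0_def by blast
  obtain A C M where A: "mono A" and C: "mono C" and h: "\<And>x. f2 x = A x - C x"
    and M: "\<And>x. \<bar>A x\<bar> \<le> M \<and> \<bar>C x\<bar> \<le> M"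
    using jordan[of f2] f2 unfolding BV0_def by blast
  have f2eq: "f2 = (\<lambda>x. A x - C x)" using h by auto
  have f2lim: "(f2 \<longlongrightarrow> 0) at_top" "(f2 \<longlongrightarrow> 0) at_bot" using f2 unfolding BV0_def by auto
  define LA where "LA = Sup (range A)"
  define LC where "LC = Sup (range C)"
  define IA where "IA = Inf (range A)"
  define IC where "IC = Inf (range C)"
  have tA: "(A \<longlongrightarrow> LA) at_top" unfolding LA_def using mono_lim_top[OF A] M by blast
  have tC: "(C \<longlongrightarrow> LC) at_top" unfolding LC_def using mono_lim_top[OF C] M by blast
  have bA: "(A \<longlongrightarrow> IA) at_bot" unfolding IA_def using mono_lim_bot[OF A] M by blast
  have bC: "(C \<longlongrightarrow> IC) at_bot" unfolding IC_def using mono_lim_bot[OF C] M by blast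
  have "LA - LC = 0"
    using tendsto_unique[OF _ tendsto_diff[OF tA tC] f2lim(1)[unfolded f2eq]] by simp
  hence tC': "(C \<longlongrightarrow> LA) at_top" using tC by simp
  have "IA - IC = 0"
    using tendsto_unique[OF _ tendsto_diff[OF bA bC] f2lim(2)[unfolded f2eq]] by simp
  hence bC': "(C \<longlongrightarrow> IA) at_bot" using bC by simp
  define \<epsilon> where "\<epsilon> = e * \<delta> / 32"
  have \<epsilon>: "\<epsilon> > 0" using d e by (simp add: \<epsilon>_def)
  obtain N1 where N1: "\<And>x. x \<ge> N1 \<Longrightarrow> \<bar>A x - LA\<bar> \<le> \<epsilon> \<and> \<bar>C x - LA\<bar> \<le> \<epsilon>"
    using lim_eventually_top[OF tA tC' \<epsilon>] by blast
  obtain N2 where N2: "\<And>x. x \<le> N2 \<Longrightarrow> \<bar>A x - IA\<bar> \<le> \<epsilon> \<and> \<bar>C x - IA\<bar> \<le> \<epsilon>"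
    using lim_eventually_bot[OF bA bC' \<epsilon>] by blast
  obtain B0 where B0: "B0 > 0" and B0': "\<And>p q. B0 \<le> p \<and> p \<le> q \<or> p \<le> q \<and> q \<le> -B0 \<Longrightarrow>
       integral {p..q} (\<lambda>x. \<bar>f1 x\<bar>) < e / 2"
    using tail_L1[OF f1, of "e/2"] e by auto
  define B where "B = max (max B0 N1) (max (-N2) 1)"
  have "B > 0" unfolding B_def by simp
  show ?thesis
  proof (intro exI[of _ B] conjI allI impI \<open>B > 0\<close>)
    fix u p q :: real
    assume u: "\<delta> \<le> \<bar>u\<bar>" and pq: "B \<le> p \<and> p \<le> q \<or> p \<le> q \<and> q \<le> -B"
    have u0: "u \<noteq> 0" using u d by auto
    have cE: "continuous_on {p..q} (Ek u)" by (intro continuous_intros)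
    have i1: "(\<lambda>x. Ek u x * complex_of_real (f1 x)) integrable_on {p..q}"
      using prod_abs_int[of p q "Ek u" f1, OF cE] set_integrable_subset[OF f1, of "{p..q}"]
      by (auto simp: absolutely_integrable_on_def)
    have a1: "f1 integrable_on {p..q}" "(\<lambda>x. \<bar>f1 x\<bar>) integrable_on {p..q}"
      using set_integrable_subset[OF f1, of "{p..q}"] by (auto simp: absolutely_integrable_on_def)
    have f2ai: "f2 absolutely_integrable_on {p..q}" unfolding f2eq
      using mono_abs_int[OF A, of M] mono_abs_int[OF C, of M] M by (intro set_integral_diff(1)) auto
    have i2: "(\<lambda>x. Ek u x * complex_of_real (f2 x)) integrable_on {p..q}"
      using prod_abs_int[of p q "Ek u" f2, OF cE f2ai]
      by (auto simp: absolutely_integrable_on_def)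
    have "integral {p..q} (\<lambda>x. Ek u x * complex_of_real (\<phi> x)) =
          integral {p..q} (\<lambda>x. Ek u x * complex_of_real (f1 x)) + integral {p..q} (\<lambda>x. Ek u x * complex_of_real (f2 x))"
      unfolding eq by (subst integral_add[OF i1 i2, symmetric]) (simp add: algebra_simps)
    hence "cmod (integral {p..q} (\<lambda>x. Ek u x * complex_of_real (\<phi> x))) \<le>
          cmod (integral {p..q} (\<lambda>x. Ek u x * complex_of_real (f1 x))) + cmod (integral {p..q} (\<lambda>x. Ek u x * complex_of_real (f2 x)))"
      by (simp add: norm_triangle_ineq)
    moreover have "cmod (integral {p..q} (\<lambda>x. Ek u x * complex_of_real (f1 x))) \<le> integral {p..q} (\<lambda>x. \<bar>f1 x\<bar>)"
      by (rule integral_norm_bound_integral[OF i1 a1(2)]) (simp add: norm_mult norm_Ek)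
    moreover have "integral {p..q} (\<lambda>x. \<bar>f1 x\<bar>) < e / 2"
    proof (rule B0')
      show "B0 \<le> p \<and> p \<le> q \<or> p \<le> q \<and> q \<le> -B0" using pq unfolding B_def by auto
    qed
    moreover have "cmod (integral {p..q} (\<lambda>x. Ek u x * complex_of_real (f2 x))) \<le> 16 * \<epsilon> / \<bar>u\<bar>"
      using pq
    proof
      assume pq: "B \<le> p \<and> p \<le> q"
      have "N1 \<le> p" "N1 \<le> q" using pq unfolding B_def by auto
      thus ?thesis using N1[of p] N1[of q] by (intro bv_piece_complex[OF A C h _ _ _ _ _ u0]) (use pq in auto)
    next
      assume pq: "p \<le> q \<and> q \<le> -B"
      have "p \<le> N2" "q \<le> N2" using pq unfolding B_def by auto
      thus ?thesis using N2[of p] N2[of q] by (intro bv_piece_complex[OF A C h _ _ _ _ _ u0]) (use pq in auto)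
    qed
    moreover have "16 * \<epsilon> / \<bar>u\<bar> \<le> e / 2"
    proof -
      have "16 * \<epsilon> / \<bar>u\<bar> \<le> 16 * \<epsilon> / \<delta>" using u d \<epsilon> by (intro divide_left_mono) auto
      also have "\<dots> = e / 2" using d by (simp add: \<epsilon>_def)
      finally show ?thesis .
    qed
    ultimately show "cmod (integral {p..q} (\<lambda>x. Ek u x * complex_of_real (\<phi> x))) \<le> e" by linarith
  qed
qed



lemma split3:
  fixes F :: "real \<Rightarrow> complex"
  assumes F: "\<And>a b. F integrable_on {a..b}" and "a \<le> -B" "B \<le> b" "0 \<le> B"
  shows "integral {a..b} F = integral {a..-B} F + integral {-B..B} F + integral {B..b} F"
proof -
  have "integral {a..-B} F + integral {-B..b} F = integral {a..b} F"
    using assms by (intro Henstock_Kurzweil_Integration.integral_combine F) auto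
  moreover have "integral {-B..B} F + integral {B..b} F = integral {-B..b} F"
    using assms by (intro Henstock_Kurzweil_Integration.integral_combine F) auto
  ultimately show ?thesis by (metis add.assoc)
qed

lemma univ_int:
  assumes phi: "\<phi> \<in> L1_plus_BV0" and d: "\<delta> > 0" and u: "\<delta> \<le> \<bar>u\<bar>"
  shows "(\<lambda>x. Ek u x * complex_of_real (\<phi> x)) integrable_on UNIV"
proof -
  let ?F = "\<lambda>x. Ek u x * complex_of_real (\<phi> x)"
  have F: "\<And>a b. ?F integrable_on {a..b}" by (rule Ek_int[OF phi])
  show ?thesis
  proof (rule integrable_alt[THEN iffD2], intro conjI allI impI)
    fix a b :: real show "(\<lambda>x. if x \<in> UNIV then ?F x else 0) integrable_on cbox a b"
      using F by simp
  next
    fix \<epsilon> :: real assume \<epsilon>: "\<epsilon> > 0"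
    obtain B where B: "B > 0" and BB: "\<And>u p q. \<delta> \<le> \<bar>u\<bar> \<Longrightarrow> (B \<le> p \<and> p \<le> q \<or> p \<le> q \<and> q \<le> -B) \<Longrightarrow>
            cmod (integral {p..q} (\<lambda>x. Ek u x * complex_of_real (\<phi> x))) \<le> \<epsilon> / 5"
      using tail[OF phi d, of "\<epsilon>/5"] \<epsilon> by auto
    show "\<exists>B>0. \<forall>a b c d. ball 0 B \<subseteq> cbox a b \<and> ball 0 B \<subseteq> cbox c d \<longrightarrow>
      norm (integral (cbox a b) (\<lambda>x. if x \<in> UNIV then ?F x else 0) -
            integral (cbox c d) (\<lambda>x. if x \<in> UNIV then ?F x else 0)) < \<epsilon>"
    proof (intro exI[of _ "B+1"] conjI allI impI)
      show "B + 1 > 0" using B by simp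
      fix a b c d :: real
      assume sub: "ball 0 (B + 1) \<subseteq> cbox a b \<and> ball 0 (B + 1) \<subseteq> cbox c d"
      have inb: "-B \<in> ball 0 (B+1)" "B \<in> ball 0 (B+1)" using B by auto
      have s1: "-B \<in> cbox a b" "B \<in> cbox a b" using sub inb by blast+
      have s2: "-B \<in> cbox c d" "B \<in> cbox c d" using sub inb by blast+
      have ab: "a \<le> -B" "B \<le> b" "c \<le> -B" "B \<le> d" using s1 s2 by simp_all
      have "integral {a..b} ?F - integral {c..d} ?F =
             (integral {a..-B} ?F - integral {c..-B} ?F) + (integral {B..b} ?F - integral {B..d} ?F)"
        using split3[OF F ab(1,2)] split3[OF F ab(3,4)] B by simp
      also have "cmod \<dots> \<le> 4 * (\<epsilon> / 5)"
      proof -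
        have "cmod (integral {a..-B} ?F) \<le> \<epsilon>/5" "cmod (integral {c..-B} ?F) \<le> \<epsilon>/5"
             "cmod (integral {B..b} ?F) \<le> \<epsilon>/5" "cmod (integral {B..d} ?F) \<le> \<epsilon>/5"
          by (rule BB[OF u]; use ab in simp)+
        moreover have "cmod (integral {a..-B} ?F - integral {c..-B} ?F) \<le> cmod (integral {a..-B} ?F) + cmod (integral {c..-B} ?F)"
          by (rule norm_triangle_ineq4)
        moreover have "cmod (integral {B..b} ?F - integral {B..d} ?F) \<le> cmod (integral {B..b} ?F) + cmod (integral {B..d} ?F)"
          by (rule norm_triangle_ineq4)
        moreover have "cmod ((integral {a..-B} ?F - integral {c..-B} ?F) + (integral {B..b} ?F - integral {B..d} ?F))
            \<le> cmod (integral {a..-B} ?F - integral {c..-B} ?F) + cmod (integral {B..b} ?F - integral {B..d} ?F)"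
          by (rule norm_triangle_ineq)
        ultimately show ?thesis by linarith
      qed
      finally show "norm (integral (cbox a b) (\<lambda>x. if x \<in> UNIV then ?F x else 0) -
            integral (cbox c d) (\<lambda>x. if x \<in> UNIV then ?F x else 0)) < \<epsilon>"
        using \<epsilon> by simp
    qed
  qed
qed

lemma trunc:
  assumes phi: "\<phi> \<in> L1_plus_BV0" and d: "\<delta> > 0" and e: "e > 0"
  shows "\<exists>N>0. \<forall>m\<ge>N. \<forall>u. \<delta> \<le> \<bar>u\<bar> \<longrightarrow>
     cmod (integral {-m..m} (\<lambda>x. Ek u x * complex_of_real (\<phi> x))
           - integral UNIV (\<lambda>x. Ek u x * complex_of_real (\<phi> x))) \<le> e"
proof -
  obtain B where B: "B > 0" and BB: "\<And>u p q. \<delta> \<le> \<bar>u\<bar> \<Longrightarrow> (B \<le> p \<and> p \<le> q \<or> p \<le> q \<and> q \<le> -B) \<Longrightarrow>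
            cmod (integral {p..q} (\<lambda>x. Ek u x * complex_of_real (\<phi> x))) \<le> e / 4"
    using tail[OF phi d, of "e/4"] e by auto
  show ?thesis
  proof (intro exI[of _ B] conjI allI impI B)
    fix m u :: real assume m: "B \<le> m" and u: "\<delta> \<le> \<bar>u\<bar>"
    let ?F = "\<lambda>x. Ek u x * complex_of_real (\<phi> x)"
    have F: "\<And>a b. ?F integrable_on {a..b}" by (rule Ek_int[OF phi])
    have "(?F has_integral integral UNIV ?F) UNIV"
      using univ_int[OF phi d u] by (rule integrable_integral)
    hence "\<forall>\<epsilon>>0. \<exists>B>0. \<forall>a b. ball 0 B \<subseteq> cbox a b \<longrightarrow>
            norm (integral (cbox a b) (\<lambda>x. if x \<in> UNIV then ?F x else 0) - integral UNIV ?F) < \<epsilon>"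
      unfolding has_integral_alt'[of ?F] by blast
    moreover have "e / 2 > 0" using e by simp
    ultimately obtain R where R: "R > 0" and RR: "\<And>a b. ball 0 R \<subseteq> cbox a b \<Longrightarrow>
        norm (integral (cbox a b) (\<lambda>x. if x \<in> UNIV then ?F x else 0) - integral UNIV ?F) < e / 2"
      by blast
    define M where "M = max m R"
    have "ball 0 R \<subseteq> cbox (-M) M" unfolding M_def by (auto simp: dist_real_def)
    from RR[OF this] have c1: "cmod (integral {-M..M} ?F - integral UNIV ?F) < e / 2" by simp
    have sp: "integral {-M..M} ?F = integral {-M..-m} ?F + integral {-m..m} ?F + integral {m..M} ?F"
      using split3[OF F, of "-M" m M] m B unfolding M_def by auto
    have t4: "cmod (integral {-M..-m} ?F) \<le> e/4" "cmod (integral {m..M} ?F) \<le> e/4"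
      by (rule BB[OF u]; use m B in \<open>simp add: M_def\<close>)+
    have eqd: "integral {-m..m} ?F - integral UNIV ?F =
        (integral {-M..M} ?F - integral UNIV ?F) - (integral {-M..-m} ?F + integral {m..M} ?F)"
      using sp by (simp add: algebra_simps)
    have tri: "cmod ((integral {-M..M} ?F - integral UNIV ?F) - (integral {-M..-m} ?F + integral {m..M} ?F))
       \<le> cmod (integral {-M..M} ?F - integral UNIV ?F) + (cmod (integral {-M..-m} ?F) + cmod (integral {m..M} ?F))"
      by (rule order_trans[OF norm_triangle_ineq4]) (simp add: norm_triangle_ineq)
    show "cmod (integral {-m..m} ?F - integral UNIV ?F) \<le> e"
      unfolding eqd using c1 t4 tri by linarith
  qed
qed



lemma Ek_taylor:
  "cmod (Ek y x - Ek s x - complex_of_real (y - s) * (- \<i> * complex_of_real x) * Ek s x) \<le> ((y - s) * x)^2 / 2"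
proof -
  let ?z = "- ((y - s) * x)"
  have e0: "Ek y x = Ek s x * iexp ?z"
    by (simp add: mult_exp_exp algebra_simps)
  have e1: "Ek y x - Ek s x - complex_of_real (y - s) * (- \<i> * complex_of_real x) * Ek s x
        = Ek s x * (iexp ?z - (\<Sum>k\<le>1. (\<i> * complex_of_real ?z)^k / fact k))"
    unfolding e0 by (simp add: algebra_simps power2_eq_square)
  have "cmod (iexp ?z - (\<Sum>k\<le>1. (\<i> * complex_of_real ?z)^k / fact k)) \<le> \<bar>?z\<bar>^(Suc 1) / fact (Suc 1)"
    by (rule iexp_approx1)
  also have "\<dots> = ((y - s) * x)^2 / 2" by (simp add: power2_abs power2_eq_square)
  finally show ?thesis unfolding e1 by (simp add: norm_mult norm_Ek)
qed

lemma trunc_deriv: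
  fixes \<psi> :: "real \<Rightarrow> real"
  assumes psi: "\<psi> absolutely_integrable_on {p..q}"
  shows "((\<lambda>s. integral {p..q} (\<lambda>x. Ek s x * complex_of_real (\<psi> x))) has_vector_derivative
          (- \<i> * integral {p..q} (\<lambda>x. Ek s x * complex_of_real (x * \<psi> x)))) (at s)"
proof -
  let ?G = "\<lambda>s. integral {p..q} (\<lambda>x. Ek s x * complex_of_real (\<psi> x))"
  let ?D = "- \<i> * integral {p..q} (\<lambda>x. Ek s x * complex_of_real (x * \<psi> x))"
  define R where "R = max \<bar>p\<bar> \<bar>q\<bar>"
  define K where "K = R^2 / 2 * integral {p..q} (\<lambda>x. \<bar>\<psi> x\<bar>) + 1"
  have ai: "(\<lambda>x. \<bar>\<psi> x\<bar>) integrable_on {p..q}" using psi by (simp add: absolutely_integrable_on_def)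
  have K0: "K > 0" unfolding K_def using integral_nonneg[OF ai] by (simp add: add_nonneg_pos)
  have iy: "(\<lambda>x. Ek y x * complex_of_real (\<psi> x)) integrable_on {p..q}" for y
    using prod_abs_int[OF _ psi, of "Ek y"] by (simp add: continuous_intros absolutely_integrable_on_def)
  have ix: "(\<lambda>x. (Ek s x * complex_of_real x) * complex_of_real (\<psi> x)) integrable_on {p..q}"
    using prod_abs_int[OF _ psi, of "\<lambda>x. Ek s x * complex_of_real x"]
    by (simp add: continuous_intros absolutely_integrable_on_def)
  have est: "cmod (?G y - ?G s - (y - s) *\<^sub>R ?D) \<le> (y - s)^2 * K" for y
  proof -
    let ?H = "\<lambda>x. (Ek y x - Ek s x - complex_of_real (y - s) * (- \<i> * complex_of_real x) * Ek s x) * complex_of_real (\<psi> x)"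
    have eqH: "?H = (\<lambda>x. Ek y x * complex_of_real (\<psi> x) - Ek s x * complex_of_real (\<psi> x)
                  - (complex_of_real (y - s) * (- \<i>)) * ((Ek s x * complex_of_real x) * complex_of_real (\<psi> x)))"
      by (auto simp: algebra_simps)
    have iH: "?H integrable_on {p..q}" unfolding eqH
      by (intro integrable_diff iy integrable_on_mult_right ix)
    have "?G y - ?G s - (y - s) *\<^sub>R ?D = integral {p..q} ?H"
      unfolding eqH
      by (subst integral_diff, intro integrable_diff iy integrable_on_mult_right ix,
          intro integrable_on_mult_right ix, subst integral_diff, (rule iy)+, subst integral_mult_right)
         (simp add: scaleR_conv_of_real algebra_simps)
    also have "cmod \<dots> \<le> integral {p..q} (\<lambda>x. ((y - s) * R)^2 / 2 * \<bar>\<psi> x\<bar>)"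
    proof (rule integral_norm_bound_integral[OF iH])
      show "(\<lambda>x. ((y - s) * R)^2 / 2 * \<bar>\<psi> x\<bar>) integrable_on {p..q}"
        by (intro integrable_on_mult_right ai)
      fix x assume x: "x \<in> {p..q}"
      have "\<bar>x\<bar> \<le> R" using x unfolding R_def by auto
      hence "((y - s) * x)^2 \<le> ((y - s) * R)^2"
        by (simp add: power_mult_distrib mult_left_mono power_mono abs_le_square_iff[symmetric])
      hence "((y - s) * x)^2 / 2 \<le> ((y - s) * R)^2 / 2" by simp
      hence "cmod (Ek y x - Ek s x - complex_of_real (y - s) * (- \<i> * complex_of_real x) * Ek s x) \<le> ((y - s) * R)^2 / 2"
        using Ek_taylor[of y x s] by linarith
      thus "cmod (?H x) \<le> ((y - s) * R)^2 / 2 * \<bar>\<psi> x\<bar>"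
        unfolding norm_mult norm_of_real by (rule mult_right_mono) simp
    qed
    also have "\<dots> = ((y - s) * R)^2 / 2 * integral {p..q} (\<lambda>x. \<bar>\<psi> x\<bar>)"
      by simp
    also have "\<dots> = (y - s)^2 * (R^2 / 2 * integral {p..q} (\<lambda>x. \<bar>\<psi> x\<bar>))"
      by (simp add: power_mult_distrib)
    also have "\<dots> \<le> (y - s)^2 * K"
      unfolding K_def by (intro mult_left_mono) auto
    finally show ?thesis .
  qed
  show ?thesis unfolding has_vector_derivative_def has_derivative_at_alt
  proof (intro conjI allI impI)
    show "bounded_linear (\<lambda>h. h *\<^sub>R ?D)" by (rule bounded_linear_scaleR_left)
    fix e :: real assume e: "e > 0"
    show "\<exists>d>0. \<forall>y. norm (y - s) < d \<longrightarrow> norm (?G y - ?G s - (y - s) *\<^sub>R ?D) \<le> e * norm (y - s)"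
    proof (intro exI[of _ "e / K"] conjI allI impI)
      show "e / K > 0" using e K0 by simp
      fix y assume y: "norm (y - s) < e / K"
      have "(y - s)^2 * K = \<bar>y - s\<bar> * (\<bar>y - s\<bar> * K)" by (simp add: power2_eq_square abs_mult_self_eq)
      also have "\<dots> \<le> \<bar>y - s\<bar> * e"
        using y K0 by (intro mult_left_mono) (auto simp: field_simps)
      finally show "norm (?G y - ?G s - (y - s) *\<^sub>R ?D) \<le> e * norm (y - s)"
        using est[of y] by (simp add: mult.commute)
    qed
  qed
qed



lemma trunc_nat:
  assumes phi: "\<phi> \<in> L1_plus_BV0" and d: "\<delta> > 0" and e: "e > 0"
  shows "\<exists>N0::nat. \<forall>n\<ge>N0. \<forall>u. \<delta> \<le> \<bar>u\<bar> \<longrightarrow>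
     cmod (integral {-real n..real n} (\<lambda>x. Ek u x * complex_of_real (\<phi> x))
           - integral UNIV (\<lambda>x. Ek u x * complex_of_real (\<phi> x))) \<le> e"
proof -
  obtain N where "N > 0" and N: "\<And>m u. m \<ge> N \<Longrightarrow> \<delta> \<le> \<bar>u\<bar> \<Longrightarrow>
     cmod (integral {-m..m} (\<lambda>x. Ek u x * complex_of_real (\<phi> x))
           - integral UNIV (\<lambda>x. Ek u x * complex_of_real (\<phi> x))) \<le> e"
    using trunc[OF phi d e] by blast
  show ?thesis
  proof (intro exI[of _ "nat \<lceil>N\<rceil>"] allI impI)
    fix n u assume "nat \<lceil>N\<rceil> \<le> n" "\<delta> \<le> \<bar>u\<bar>"
    moreover have "N \<le> real n" using \<open>nat \<lceil>N\<rceil> \<le> n\<close> by linarith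
    ultimately show "cmod (integral {-real n..real n} (\<lambda>x. Ek u x * complex_of_real (\<phi> x))
           - integral UNIV (\<lambda>x. Ek u x * complex_of_real (\<phi> x))) \<le> e"
      by (intro N) auto
  qed
qed

lemma trunc_lim:
  assumes phi: "\<phi> \<in> L1_plus_BV0" and d: "\<delta> > 0" and u: "\<delta> \<le> \<bar>u\<bar>"
  shows "(\<lambda>n. integral {-real n..real n} (\<lambda>x. Ek u x * complex_of_real (\<phi> x)))
           \<longlonglongrightarrow> integral UNIV (\<lambda>x. Ek u x * complex_of_real (\<phi> x))"
proof (rule LIMSEQ_I)
  fix r :: real assume r: "r > 0"
  obtain N0 where N0: "\<And>n u. n \<ge> N0 \<Longrightarrow> \<delta> \<le> \<bar>u\<bar> \<Longrightarrow>
     cmod (integral {-real n..real n} (\<lambda>x. Ek u x * complex_of_real (\<phi> x))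
           - integral UNIV (\<lambda>x. Ek u x * complex_of_real (\<phi> x))) \<le> r / 2"
    using trunc_nat[OF phi d, of "r/2"] r by auto
  show "\<exists>no. \<forall>n\<ge>no. norm (integral {-real n..real n} (\<lambda>x. Ek u x * complex_of_real (\<phi> x))
           - integral UNIV (\<lambda>x. Ek u x * complex_of_real (\<phi> x))) < r"
    using N0[OF _ u] r by (intro exI[of _ N0]) (auto intro: le_less_trans[of _ "r/2"])
qed

lemma local_main:
  fixes f :: "real \<Rightarrow> real"
  assumes f: "f \<in> L1_plus_BV0" and g: "(\<lambda>t. t * f t) \<in> L1_plus_BV0"
    and d: "\<delta> > 0" and S: "open S" "convex S" "x0 \<in> S" and Sd: "\<And>s. s \<in> S \<Longrightarrow> \<delta> \<le> \<bar>s\<bar>"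
  shows "(\<forall>s\<in>S. ((\<lambda>s. integral UNIV (\<lambda>x. Ek s x * complex_of_real (f x))) has_vector_derivative
             (- \<i> * integral UNIV (\<lambda>x. Ek s x * complex_of_real (x * f x)))) (at s))
         \<and> continuous_on S (\<lambda>s. integral UNIV (\<lambda>x. Ek s x * complex_of_real (x * f x)))"
proof -
  define I where "I = (\<lambda>s. integral UNIV (\<lambda>x. Ek s x * complex_of_real (f x)))"
  define J where "J = (\<lambda>s. integral UNIV (\<lambda>x. Ek s x * complex_of_real (x * f x)))"
  define Fn where "Fn = (\<lambda>n::nat. \<lambda>s. integral {-real n..real n} (\<lambda>x. Ek s x * complex_of_real (f x)))"
  define Jn where "Jn = (\<lambda>n::nat. \<lambda>s. integral {-real n..real n} (\<lambda>x. Ek s x * complex_of_real (x * f x)))"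
  have derF: "(Fn n has_vector_derivative (- \<i> * Jn n s)) (at s)" for n s
    unfolding Fn_def Jn_def by (rule trunc_deriv[OF loc_abs[OF f]])
  have derJ: "(Jn n has_vector_derivative (- \<i> * integral {-real n..real n} (\<lambda>x. Ek s x * complex_of_real (x * (x * f x))))) (at s)" for n s
    unfolding Jn_def using trunc_deriv[OF loc_abs[OF g]] by simp
  have unif: "\<forall>\<^sub>F n in sequentially. \<forall>s\<in>S. cmod (Jn n s - J s) \<le> e" if e0: "e > 0" for e
  proof -
    obtain N0 where N0: "\<And>n u. n \<ge> N0 \<Longrightarrow> \<delta> \<le> \<bar>u\<bar> \<Longrightarrow>
       cmod (integral {-real n..real n} (\<lambda>x. Ek u x * complex_of_real (x * f x))
           - integral UNIV (\<lambda>x. Ek u x * complex_of_real (x * f x))) \<le> e"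
      using trunc_nat[OF g d e0] by auto
    show ?thesis unfolding eventually_sequentially Jn_def J_def using N0 Sd by blast
  qed
  have limI: "(\<lambda>n. Fn n s) \<longlonglongrightarrow> I s" if "s \<in> S" for s
    unfolding Fn_def I_def by (rule trunc_lim[OF f d Sd[OF that]])
  obtain G where G: "\<And>s. s \<in> S \<Longrightarrow> (\<lambda>n. Fn n s) \<longlonglongrightarrow> G s \<and>
      (G has_derivative (\<lambda>h. h *\<^sub>R (- \<i> * J s))) (at s within S)"
  proof -
    have "\<exists>G. \<forall>s\<in>S. (\<lambda>n. Fn n s) \<longlonglongrightarrow> G s \<and> (G has_derivative (\<lambda>h. h *\<^sub>R (- \<i> * J s))) (at s within S)"
    proof (rule has_derivative_sequence[where f=Fn and f'="\<lambda>n s h. h *\<^sub>R (- \<i> * Jn n s)"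
                and g'="\<lambda>s h. h *\<^sub>R (- \<i> * J s)"])
      show "convex S" by (rule S(2))
      show "x0 \<in> S" by (rule S(3))
      show "(\<lambda>n. Fn n x0) \<longlonglongrightarrow> I x0" by (rule limI[OF S(3)])
      show "(Fn n has_derivative (\<lambda>h. h *\<^sub>R (- \<i> * Jn n s))) (at s within S)" if "s \<in> S" for n s
        using derF[of n s] unfolding has_vector_derivative_def by (rule has_derivative_at_withinI)
      show "\<forall>\<^sub>F n in sequentially. \<forall>s\<in>S. \<forall>h. norm (h *\<^sub>R (- \<i> * Jn n s) - h *\<^sub>R (- \<i> * J s)) \<le> e * norm h"
        if "e > 0" for e
        using unif[OF \<open>e > 0\<close>]
      proof eventually_elim
        case (elim n)
        show ?case
        proof (intro ballI allI)
          fix s h assume "s \<in> S"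
          have "norm (h *\<^sub>R (- \<i> * Jn n s) - h *\<^sub>R (- \<i> * J s)) = \<bar>h\<bar> * cmod (Jn n s - J s)"
            by (simp add: scaleR_diff_right[symmetric] right_diff_distrib[symmetric] norm_mult norm_minus_commute)
          also have "\<dots> \<le> \<bar>h\<bar> * e" using elim \<open>s \<in> S\<close> by (intro mult_left_mono) auto
          finally show "norm (h *\<^sub>R (- \<i> * Jn n s) - h *\<^sub>R (- \<i> * J s)) \<le> e * norm h"
            by (simp add: mult.commute)
        qed
      qed
    qed
    thus ?thesis using that by blast
  qed
  have GI: "G s = I s" if "s \<in> S" for s using G[OF that] limI[OF that] LIMSEQ_unique by blast
  have derI: "(I has_vector_derivative (- \<i> * J s)) (at s)" if "s \<in> S" for s
  proof -
    have "(G has_derivative (\<lambda>h. h *\<^sub>R (- \<i> * J s))) (at s)"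
      using G[OF that] at_within_open[OF that S(1)] by simp
    hence "(I has_derivative (\<lambda>h. h *\<^sub>R (- \<i> * J s))) (at s)"
      by (rule has_derivative_transform_within_open[OF _ S(1) that]) (simp add: GI)
    thus ?thesis by (simp add: has_vector_derivative_def)
  qed
  have contJ: "continuous_on S J"
  proof (rule uniform_limit_theorem[where f = Jn and F = sequentially])
    show "\<forall>\<^sub>F n in sequentially. continuous_on S (Jn n)"
      using derJ by (intro always_eventually allI continuous_at_imp_continuous_on ballI has_vector_derivative_continuous) blast
    show "uniform_limit S Jn J sequentially"
    proof (rule uniform_limitI)
      fix e :: real assume "e > 0"
      hence "e / 2 > 0" by simp
      from unif[OF this] show "\<forall>\<^sub>F n in sequentially. \<forall>x\<in>S. dist (Jn n x) (J x) < e"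
        by eventually_elim (use \<open>e > 0\<close> in \<open>auto simp: dist_norm intro: le_less_trans[of _ "e/2"]\<close>)
    qed
  qed simp
  show ?thesis using derI contJ unfolding I_def J_def by blast
qed



theorem mainTheorem5:
  fixes f :: "real \<Rightarrow> real"
  assumes "f \<in> L1_plus_BV0"
    and "(\<lambda>t. t * f t) \<in> L1_plus_BV0"
  shows "FHK f C1_differentiable_on (- {0})
     \<and> (\<forall>s. s \<noteq> 0 \<longrightarrow>
          (FHK f has_vector_derivative (- \<i> * FHK (\<lambda>t. t * f t) s)) (at s))"
proof -
  define c where "c = 1 / complex_of_real (sqrt (2 * pi))"
  define I where "I = (\<lambda>s. integral UNIV (\<lambda>x. Ek s x * complex_of_real (f x)))"
  define J where "J = (\<lambda>s. integral UNIV (\<lambda>x. Ek s x * complex_of_real (x * f x)))"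
  have FHKf: "FHK f = (\<lambda>s. c * I s)" by (rule ext) (simp add: FHK_def c_def I_def)
  have FHKg: "FHK (\<lambda>t. t * f t) = (\<lambda>s. c * J s)" by (rule ext) (simp add: FHK_def c_def J_def)
  have loc: "(I has_vector_derivative (- \<i> * J s)) (at s) \<and> isCont J s" if "s \<noteq> 0" for s
  proof -
    have *: "(I has_vector_derivative (- \<i> * J s)) (at s) \<and> isCont J s"
      if S: "open S" "convex S" "s \<in> S" "\<delta> > 0" "\<And>u. u \<in> S \<Longrightarrow> \<delta> \<le> \<bar>u\<bar>" for S \<delta>
    proof -
      have "(\<forall>s\<in>S. (I has_vector_derivative (- \<i> * J s)) (at s)) \<and> continuous_on S J"
        unfolding I_def J_def by (rule local_main[OF assms S(4) S(1) S(2) S(3) S(5)])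
      thus ?thesis using S(1,3) continuous_on_eq_continuous_at[OF S(1)] by blast
    qed
    show ?thesis
    proof (cases "s > 0")
      case True
      show ?thesis by (rule *[of "{s/2<..}" "s/2"]) (use True in auto)
    next
      case False
      hence "s < 0" using that by simp
      show ?thesis by (rule *[of "{..<s/2}" "-s/2"]) (use \<open>s < 0\<close> in auto)
    qed
  qed
  have der: "(FHK f has_vector_derivative (- \<i> * FHK (\<lambda>t. t * f t) s)) (at s)" if "s \<noteq> 0" for s
  proof -
    have "((\<lambda>s. c * I s) has_vector_derivative (c * (- \<i> * J s))) (at s)"
      using loc[OF that] by (intro has_vector_derivative_mult_right) blast
    thus ?thesis unfolding FHKf FHKg by (simp only: mult.left_commute)
  qed
  have cont: "continuous_on (- {0}) (\<lambda>s. - \<i> * FHK (\<lambda>t. t * f t) s)"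
  proof -
    have "continuous_on (- {0}) J"
      by (rule continuous_at_imp_continuous_on) (use loc in blast)
    thus ?thesis unfolding FHKg by (intro continuous_intros)
  qed
  have "FHK f C1_differentiable_on (- {0})"
    unfolding C1_differentiable_on_def
    by (rule exI[of _ "\<lambda>s. - \<i> * FHK (\<lambda>t. t * f t) s"]) (use der cont in auto)
  thus ?thesis using der by blast
qed

end
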